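(* Let $(X,\mu)$ and $(Z,\nu)$ be standard Borel probability spaces, and let $z\mapsto\mu_z$ be a measurable family of uniformly bounded finite Borel measures on $X$ such that $\mu=\int_Z\mu_z\,\nu(dz)$ and $\mu_z\ll_{M,\varepsilon}\mu$ for every $z\in Z$. Suppose that for each $z\in Z$, $Y_z\subseteq X$ is a Borel set with $\mu_z(Y_z)=1$. Then for every $\alpha<1-\varepsilon$ there is a finite set $S\subseteq Z$ with \[|S|\le\frac{M}{1-\alpha-\varepsilon}\quad\text{and}\quad \mu\Big(\bigcup_{z\in S}Y_z\Big)>\alpha.\]
   Context: For finite measures $\mu,\nu$ on a measurable space and $M\in(0,\infty)$, $\varepsilon\in[0,\infty)$, write $\mu\ll_{M,\varepsilon}\nu$ if $\mu(A)\le M\nu(A)+\varepsilon$ for every measurable $A$. The measures $\mu_z$ need not be probability measures. *)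

theory Defs
  imports "HOL-Probability.Probability"
begin

definition abs_cont_within :: "'a measure \<Rightarrow> real \<Rightarrow> real \<Rightarrow> 'a measure \<Rightarrow> bool" where
  "abs_cont_within mu M eps nu \<longleftrightarrow>
     (\<forall>A \<in> sets mu. measure mu A \<le> M * measure nu A + eps)"

definition measurable_family :: "'b measure \<Rightarrow> ('b \<Rightarrow> 'a::topological_space measure) \<Rightarrow> bool" where
  "measurable_family nu K \<longleftrightarrow>
     (\<forall>z \<in> space nu. sets (K z) = sets borel \<and> finite_measure (K z)) \<and>
     (\<forall>A \<in> sets borel. (\<lambda>z. emeasure (K z) A) \<in> borel_measurable nu)"

end

theory Submission
  imports Defs
begin

theorem mainTheorem9:
  fixes mu :: "'a::polish_space measure"
    and nu :: "'b::polish_space measure"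
    and K :: "'b \<Rightarrow> 'a measure"
    and Y :: "'b \<Rightarrow> 'a set"
    and M eps alpha :: real
  assumes mu_prob: "prob_space mu" and mu_sets: "sets mu = sets borel"
    and nu_prob: "prob_space nu" and nu_sets: "sets nu = sets borel"
    and M_pos: "M > 0" and eps_nonneg: "eps \<ge> 0"
    and K_meas: "measurable_family nu K"
    and K_bdd: "\<exists>C::real. \<forall>z. emeasure (K z) UNIV \<le> ennreal C"
    and disint: "\<forall>A \<in> sets borel. emeasure mu A = (\<integral>\<^sup>+ z. emeasure (K z) A \<partial>nu)"
    and K_ac: "\<forall>z. abs_cont_within (K z) M eps mu"
    and Y_borel: "\<forall>z. Y z \<in> sets borel"
    and Y_full: "\<forall>z. measure (K z) (Y z) = 1"
    and alpha: "alpha < 1 - eps"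
  shows "\<exists>S. finite S \<and> real (card S) \<le> M / (1 - alpha - eps) \<and>
             measure mu (\<Union>z\<in>S. Y z) > alpha"
proof -
  interpret P: prob_space mu by (rule mu_prob)
  interpret N: prob_space nu by (rule nu_prob)
  have spnu: "space nu = UNIV" using nu_sets sets_eq_imp_space_eq by fastforce
  have Ksets: "\<And>z. sets (K z) = sets borel" and Kfin: "\<And>z. finite_measure (K z)"
    using K_meas spnu unfolding measurable_family_def by auto
  have Kmeas: "\<And>A. A \<in> sets borel \<Longrightarrow> (\<lambda>z. emeasure (K z) A) \<in> borel_measurable nu"
    using K_meas unfolding measurable_family_def by auto
  have ac: "\<And>z A. A \<in> sets borel \<Longrightarrow> measure (K z) A \<le> M * measure mu A + eps"
    using K_ac Ksets unfolding abs_cont_within_def by auto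
  define d where "d = (1 - alpha - eps) / M"
  have dpos: "d > 0" using alpha M_pos by (simp add: d_def)
  show ?thesis
  proof (cases "alpha < 0")
    case True
    then show ?thesis using M_pos alpha by (intro exI[of _ "{}"]) auto
  next
    case False
    hence a0: "alpha \<ge> 0" by simp
    obtain z0 :: 'b where True by simp
    have "1 \<le> M * measure mu (Y z0) + eps" using ac[of "Y z0" z0] Y_borel Y_full by auto
    also have "\<dots> \<le> M + eps" using M_pos P.prob_le_1 by (simp add: mult_le_cancel_left1)
    finally have M1: "M \<ge> 1 - eps" by simp
    have "(1 - alpha - eps) \<le> M * (1 - alpha)"
    proof -
      have "(1 - eps) * (1 - alpha) \<le> M * (1 - alpha)"
        using M1 alpha a0 eps_nonneg by (intro mult_right_mono) auto
      moreover have "1 - alpha - eps \<le> (1 - eps) * (1 - alpha)"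
        using a0 eps_nonneg by (simp add: algebra_simps)
      ultimately show ?thesis by linarith
    qed
    hence d1: "d \<le> 1 - alpha" using M_pos by (simp add: d_def divide_le_eq mult.commute)
    have Ub: "(\<Union>z\<in>S. Y z) \<in> sets borel" if "finite S" for S
      using that Y_borel by (intro sets.finite_UN) auto
    have step: "\<exists>z. measure mu (U \<union> Y z) \<ge> measure mu U + d"
      if U: "U \<in> sets borel" and Ua: "measure mu U \<le> alpha" for U
    proof -
      have "\<exists>z. measure (K z) U \<le> measure mu U"
      proof (rule ccontr)
        assume "\<not> ?thesis"
        hence lt: "\<And>z. measure mu U < measure (K z) U" by (simp add: not_le)
        have eK: "\<And>z. emeasure (K z) U = ennreal (measure (K z) U)"
          using finite_measure.emeasure_eq_measure[OF Kfin] by auto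
        have "(\<integral>\<^sup>+ z. ennreal (measure mu U) \<partial>nu) < (\<integral>\<^sup>+ z. emeasure (K z) U \<partial>nu)"
        proof (rule nn_integral_less)
          show "(\<lambda>z. emeasure (K z) U) \<in> borel_measurable nu" using Kmeas U by auto
          show "(\<integral>\<^sup>+ z. ennreal (measure mu U) \<partial>nu) \<noteq> \<infinity>"
            by (simp add: N.emeasure_space_1)
          show "AE z in nu. ennreal (measure mu U) \<le> emeasure (K z) U"
            using lt eK by (auto intro!: AE_I2 ennreal_leI less_imp_le)
          show "\<not> (AE z in nu. emeasure (K z) U \<le> ennreal (measure mu U))"
          proof
            assume "AE z in nu. emeasure (K z) U \<le> ennreal (measure mu U)"
            hence "AE z in nu. False"
              by (rule AE_mp) (auto intro!: AE_I2 simp: eK ennreal_le_iff not_le lt)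
            thus False using N.AE_False by simp
          qed
        qed simp
        also have "\<dots> = emeasure mu U" using disint U by auto
        also have "\<dots> = ennreal (measure mu U)" by (simp add: P.emeasure_eq_measure)
        finally show False by (simp add: N.emeasure_space_1)
      qed
      then obtain z where z: "measure (K z) U \<le> measure mu U" by blast
      have YU: "Y z - U \<in> sets borel" using Y_borel U by auto
      have YU2: "Y z \<union> U \<in> sets borel" using Y_borel U by auto
      have "1 = measure (K z) (Y z)" using Y_full by simp
      also have "\<dots> \<le> measure (K z) (Y z \<union> U)"
        using finite_measure.finite_measure_mono[OF Kfin, of "Y z" "Y z \<union> U" z] Ksets YU2 by simp
      also have "\<dots> \<le> measure (K z) (Y z - U) + measure (K z) U"
      proof -
        have "Y z \<union> U = (Y z - U) \<union> U" by blast
        moreover have "measure (K z) ((Y z - U) \<union> U) \<le> measure (K z) (Y z - U) + measure (K z) U"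
          by (rule measure_Un_le) (simp_all add: Ksets U YU)
        ultimately show ?thesis by simp
      qed
      also have "\<dots> \<le> M * measure mu (Y z - U) + eps + alpha" using ac[OF YU, of z] z Ua by linarith
      finally have "d \<le> measure mu (Y z - U)" using M_pos
        by (simp add: d_def divide_le_eq mult.commute)
      moreover have "measure mu (U \<union> Y z) = measure mu U + measure mu (Y z - U)"
        using P.finite_measure_Union[of U "Y z - U"] U YU mu_sets by (simp add: Un_Diff_cancel)
      ultimately show ?thesis by (intro exI[of _ z]) simp
    qed
    have ind: "\<exists>S. finite S \<and> card S \<le> n \<and>
       (measure mu (\<Union>z\<in>S. Y z) > alpha \<or> measure mu (\<Union>z\<in>S. Y z) \<ge> n * d)" for n
    proof (induction n)
      case 0
      then show ?case by (intro exI[of _ "{}"]) auto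
    next
      case (Suc n)
      then obtain S where S: "finite S" "card S \<le> n"
        "measure mu (\<Union>z\<in>S. Y z) > alpha \<or> measure mu (\<Union>z\<in>S. Y z) \<ge> n * d" by blast
      show ?case
      proof (cases "measure mu (\<Union>z\<in>S. Y z) > alpha")
        case True
        then show ?thesis using S by (intro exI[of _ S]) auto
      next
        case False
        then obtain z where z: "measure mu ((\<Union>z\<in>S. Y z) \<union> Y z) \<ge> measure mu (\<Union>z\<in>S. Y z) + d"
          using step[OF Ub[OF S(1)]] by auto
        have "card (insert z S) \<le> Suc n" using S by (simp add: card_insert_if)
        moreover have "(\<Union>x\<in>insert z S. Y x) = (\<Union>z\<in>S. Y z) \<union> Y z" by auto
        ultimately show ?thesis using S False z
          by (intro exI[of _ "insert z S"]) (auto simp: algebra_simps)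
      qed
    qed
    define n where "n = nat \<lfloor>1 / d\<rfloor>"
    have n1: "real n \<le> 1 / d" using dpos by (simp add: n_def)
    have n2: "real n > 1 / d - 1" using dpos by (simp add: n_def)
    obtain S where S: "finite S" "card S \<le> n"
      "measure mu (\<Union>z\<in>S. Y z) > alpha \<or> measure mu (\<Union>z\<in>S. Y z) \<ge> n * d"
      using ind by blast
    have eq: "1 / d = M / (1 - alpha - eps)" by (simp add: d_def)
    have "measure mu (\<Union>z\<in>S. Y z) > alpha"
    proof (rule ccontr)
      assume "\<not> ?thesis"
      hence "n * d \<le> alpha" using S by auto
      moreover have "n * d > 1 - d"
      proof -
        have "(1 / d - 1) * d < n * d" using n2 dpos by (rule mult_strict_right_mono)
        moreover have "(1 / d - 1) * d = 1 - d" using dpos by (simp add: algebra_simps)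
        ultimately show ?thesis by simp
      qed
      ultimately show False using d1 by linarith
    qed
    then show ?thesis using S n1 eq by (intro exI[of _ S]) auto
  qed
qed

end
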